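(* For any $n\ge0$ and $q\ge1$, let $\mathcal{A}^+$ (resp. $\mathcal{A}^-$) be the set of words of $\mathcal{W}^q_n$ having an even (resp. odd) number of letters $1$. Then $|\mathcal{A}^+|-|\mathcal{A}^-|\in\{-1,0,1\}$.
   Context: For $q\ge1$, a binary word is $q$-decreasing if for every maximal run of $0$s, of length $a>0$, together with the (possibly empty) maximal run of $1$s immediately following it, of length $b$, one has $q\cdot a>b$; $\mathcal{W}^q_n$ is the set of $q$-decreasing words of length $n$. *)

theory Defs
  imports Main
begin

text \<open>A word is q-decreasing if for every maximal run of 0s (of length a > 0),
starting at position i, the maximal run of 1s immediately following it
(of length b, possibly 0) satisfies q * a > b.\<close>

definition q_decreasing :: "nat \<Rightarrow> nat list \<Rightarrow> bool" where
  "q_decreasing q w \<longleftrightarrow>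
     (\<forall>i < length w. (w ! i = 0 \<and> (i = 0 \<or> w ! (i - 1) \<noteq> 0)) \<longrightarrow>
        (let a = length (takeWhile (\<lambda>x. x = 0) (drop i w));
             b = length (takeWhile (\<lambda>x. x = 1) (drop (i + a) w))
         in q * a > b))"

definition qdec_words :: "nat \<Rightarrow> nat \<Rightarrow> nat list set" where
  "qdec_words q n = {w. length w = n \<and> set w \<subseteq> {0, 1} \<and> q_decreasing q w}"

definition num_ones :: "nat list \<Rightarrow> nat" where
  "num_ones w = length (filter (\<lambda>x. x = 1) w)"

end

theory Submission
  imports Defs
begin

definition Pb :: "nat \<Rightarrow> nat list \<Rightarrow> bool" where
  "Pb q u = (let a = length (takeWhile (\<lambda>x. x = 0) u);
                 b = length (takeWhile (\<lambda>x. x = 1) (drop a u)) in q * a > b)"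

fun G :: "nat \<Rightarrow> bool \<Rightarrow> nat list \<Rightarrow> bool" where
  "G q c [] = True"
| "G q c (x # w) = ((x = 0 \<and> c \<longrightarrow> Pb q (x # w)) \<and> G q (x \<noteq> 0) w)"

lemma all_less_Suc_split: "(\<forall>i<Suc n. P i) = (P 0 \<and> (\<forall>j<n. P (Suc j)))"
  using less_Suc_eq_0_disj by auto

lemma G_iff:
  "G q c w = (\<forall>i<length w. (w ! i = 0 \<and> (i = 0 \<and> c \<or> i > 0 \<and> w ! (i - 1) \<noteq> 0))
                 \<longrightarrow> Pb q (drop i w))"
proof (induction w arbitrary: c)
  case Nil
  then show ?case by simp
next
  case (Cons x w)
  show ?case
    unfolding length_Cons all_less_Suc_split G.simps Cons.IH
    apply (simp only: nth_Cons_0 nth_Cons_Suc drop0 drop_Suc_Cons diff_Suc_1 simp_thms)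
    apply (intro conj_cong refl all_cong imp_cong)
    apply (auto simp: nth_Cons')
    done
qed

lemma qdec_G: "q_decreasing q w = G q True w"
proof -
  have eq: "\<And>i (P::bool). (i = (0::nat) \<and> True \<or> 0 < i \<and> P) = (i = 0 \<or> P)" by auto
  have dd: "\<And>a i. drop a (drop i w) = drop (i + a) w" by (simp add: add.commute)
  show ?thesis
    unfolding q_decreasing_def G_iff Pb_def Let_def eq dd by (rule refl)
qed

lemma Pb_app:
  assumes "z \<noteq> []" "last z = 1" "v = [] \<or> hd v = 0"
  shows "Pb q (z @ v) = Pb q z"
proof -
  have lz: "last z \<in> set z" using assms(1) by (rule last_in_set)
  have n0: "\<not> (last z = 0)" using assms(2) by simp
  define a where "a = length (takeWhile (\<lambda>x. x = 0) z)"
  have tw: "takeWhile (\<lambda>x. x = 0) (z @ v) = takeWhile (\<lambda>x. x = 0) z"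
    by (rule takeWhile_append1[OF lz]) (rule n0)
  have ale: "a \<le> length z" unfolding a_def by (rule length_takeWhile_le)
  have dr: "drop a (z @ v) = drop a z @ v" using ale by simp
  have tv: "takeWhile (\<lambda>x. x = 1) v = []" using assms(3) by (cases v) auto
  have key: "takeWhile (\<lambda>x. x = 1) (drop a z @ v) = takeWhile (\<lambda>x. x = 1) (drop a z)"
  proof (cases "\<forall>x\<in>set (drop a z). x = 1")
    case True
    then have e1: "takeWhile (\<lambda>x. x = 1) (drop a z) = drop a z" by (simp only: takeWhile_eq_all_conv)
    have "takeWhile (\<lambda>x. x = 1) (drop a z @ v) = drop a z @ takeWhile (\<lambda>x. x = 1) v"
      by (rule takeWhile_append2) (use True in blast)
    then show ?thesis by (simp only: tv e1 append_Nil2)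
  next
    case False
    then obtain y where "y \<in> set (drop a z)" "\<not> y = 1" by blast
    then show ?thesis by (rule takeWhile_append1)
  qed
  show ?thesis unfolding Pb_def Let_def tw a_def[symmetric] dr key by (rule refl)
qed


lemma G_app:
  assumes "x \<noteq> []" "last x = 1" "v = [] \<or> hd v = 0"
  shows "G q c (x @ v) = (G q c x \<and> G q True v)"
  using assms
proof (induction x arbitrary: c)
  case Nil
  then show ?case by simp
next
  case (Cons y x')
  show ?case
  proof (cases "x' = []")
    case True
    then show ?thesis using Cons.prems by simp
  next
    case False
    have l: "last x' = 1" using Cons.prems False by simp
    have "Pb q ((y # x') @ v) = Pb q (y # x')"
      by (rule Pb_app) (use Cons.prems in auto)
    then show ?thesis using Cons.IH[OF False l Cons.prems(3)] by auto
  qed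
qed

lemma G_ones: "G q c (replicate k 1)"
  by (induction k arbitrary: c) auto

lemma G_zeros: "G q False (replicate k 0 @ replicate b 1)"
  by (induction k) (auto simp: G_ones G_ones[simplified])

lemma tw0_ones: "takeWhile (\<lambda>x. x = 0) (replicate b (1::nat)) = []"
  by (cases b) auto

lemma Pb_block: "Pb q (replicate a 0 @ replicate b 1) = (b < q * a)"
proof -
  have t1: "takeWhile (\<lambda>x. x = 0) (replicate a 0 @ replicate b (1::nat)) = replicate a 0"
    by (induction a) (simp_all add: tw0_ones)
  have t2: "takeWhile (\<lambda>x. x = 1) (replicate b (1::nat)) = replicate b 1"
    by (induction b) simp_all
  show ?thesis unfolding Pb_def Let_def t1 by (simp add: t2)
qed

lemma G_block:
  assumes "a \<ge> 1"
  shows "G q True (replicate a 0 @ replicate b 1) = (b < q * a)"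
proof -
  obtain a' where a: "a = Suc a'" using assms by (cases a) auto
  have "G q True (replicate a 0 @ replicate b 1) = (Pb q (replicate a 0 @ replicate b 1) \<and> G q False (replicate a' 0 @ replicate b 1))"
    unfolding a by simp
  then show ?thesis using Pb_block G_zeros by simp
qed

lemma BL:
  assumes "u = [] \<or> last u = 1" "a \<ge> 1"
  shows "G q True (u @ replicate a 0 @ replicate b 1) = (G q True u \<and> b < q * a)"
proof (cases "u = []")
  case True
  then show ?thesis using G_block[OF assms(2)] by simp
next
  case False
  have "hd (replicate a 0 @ replicate b (1::nat)) = 0" using assms(2) by (cases a) auto
  then show ?thesis using G_app[OF False, of "replicate a 0 @ replicate b 1" q True] assms False
    G_block[OF assms(2)] by auto
qed

lemma decomp:
  assumes "set w \<subseteq> {0, 1::nat}"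
  shows "(\<exists>k. w = replicate k 1) \<or>
         (\<exists>u a b. w = u @ replicate a 0 @ replicate b 1 \<and> a \<ge> 1 \<and> (u = [] \<or> last u = 1) \<and> set u \<subseteq> {0,1})"
  using assms
proof (induction w rule: rev_induct)
  case Nil
  then show ?case by (intro disjI1 exI[of _ 0]) simp
next
  case (snoc x w)
  have x: "x = 0 \<or> x = 1" and sw: "set w \<subseteq> {0,1}" using snoc.prems by auto
  from snoc.IH[OF sw] show ?case
  proof
    assume "\<exists>k. w = replicate k 1"
    then obtain k where k: "w = replicate k 1" by blast
    show ?thesis
    proof (cases "x = 1")
      case True
      then show ?thesis using k by (intro disjI1 exI[of _ "Suc k"]) (simp add: replicate_append_same)
    next
      case False
      then have "x = 0" using x by simp
      then show ?thesis using k sw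
        by (intro disjI2 exI[of _ w] exI[of _ 1] exI[of _ 0]) (cases k, auto)
    qed
  next
    assume "\<exists>u a b. w = u @ replicate a 0 @ replicate b 1 \<and> a \<ge> 1 \<and> (u = [] \<or> last u = 1) \<and> set u \<subseteq> {0,1}"
    then obtain u a b where w: "w = u @ replicate a 0 @ replicate b 1" and a: "a \<ge> 1"
      and u: "u = [] \<or> last u = 1" "set u \<subseteq> {0,1}" by blast
    show ?thesis
    proof (cases "x = 1")
      case True
      then show ?thesis using w a u
        by (intro disjI2 exI[of _ u] exI[of _ a] exI[of _ "Suc b"]) (simp add: replicate_append_same)
    next
      case False
      then have x0: "x = 0" using x by simp
      show ?thesis
      proof (cases b)
        case 0
        then show ?thesis using w a u x0
          by (intro disjI2 exI[of _ u] exI[of _ "Suc a"] exI[of _ 0]) (simp add: replicate_append_same)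
      next
        case (Suc b')
        then show ?thesis using w a u x0 sw
          by (intro disjI2 exI[of _ w] exI[of _ 1] exI[of _ 0]) (simp add: replicate_append_same)
      qed
    qed
  qed
qed


lemma V0_end1:
  assumes "w = [] \<or> last w = 1" "q \<ge> 1"
  shows "G q True (w @ [0]) = G q True w"
proof -
  have "G q True (w @ [0]) = G q True (w @ replicate 1 0 @ replicate 0 1)" by simp
  also have "\<dots> = (G q True w \<and> 0 < q * 1)" by (rule BL) (use assms in auto)
  finally show ?thesis using assms by simp
qed

lemma V0:
  assumes "set w \<subseteq> {0, 1}" "q \<ge> 1"
  shows "G q True (w @ [0]) = G q True w"
  using decomp[OF assms(1)]
proof
  assume "\<exists>k. w = replicate k 1"
  then obtain k where k: "w = replicate k 1" by blast
  have "w = [] \<or> last w = 1" using k by (cases k) auto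
  then show ?thesis using V0_end1 assms(2) by blast
next
  assume "\<exists>u a b. w = u @ replicate a 0 @ replicate b 1 \<and> a \<ge> 1 \<and> (u = [] \<or> last u = 1) \<and> set u \<subseteq> {0,1}"
  then obtain u a b where w: "w = u @ replicate a 0 @ replicate b 1" and a: "a \<ge> 1"
    and u: "u = [] \<or> last u = 1" by blast
  show ?thesis
  proof (cases b)
    case 0
    have "G q True (w @ [0]) = G q True (u @ replicate (Suc a) 0 @ replicate 0 1)"
      using w 0 by (simp add: replicate_append_same)
    also have "\<dots> = (G q True u \<and> 0 < q * Suc a)" by (rule BL) (use u in auto)
    also have "\<dots> = (G q True u \<and> 0 < q * a)" using a assms(2) by simp
    also have "\<dots> = G q True w" unfolding w 0 by (rule BL[symmetric]) (use u a in auto)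
    finally show ?thesis .
  next
    case (Suc b')
    have "last w = 1" using w Suc by simp
    then show ?thesis using V0_end1 assms(2) by blast
  qed
qed

lemma Uchar:
  assumes "set w \<subseteq> {0, 1}" "q \<ge> 1"
  shows "(G q True w \<and> \<not> G q True (w @ [1])) =
         (\<exists>u a. w = u @ replicate a 0 @ replicate (q * a - 1) 1 \<and> a \<ge> 1 \<and>
                (u = [] \<or> last u = 1) \<and> set u \<subseteq> {0, 1} \<and> G q True u)"
proof
  assume L: "G q True w \<and> \<not> G q True (w @ [1])"
  from decomp[OF assms(1)] show "\<exists>u a. w = u @ replicate a 0 @ replicate (q * a - 1) 1 \<and> a \<ge> 1 \<and>
                (u = [] \<or> last u = 1) \<and> set u \<subseteq> {0, 1} \<and> G q True u"
  proof
    assume "\<exists>k. w = replicate k 1"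
    then obtain k where k: "w = replicate k 1" by blast
    have "w @ [1] = replicate (Suc k) 1" using k by (simp add: replicate_append_same)
    then have "G q True (w @ [1])" using G_ones by simp
    then show ?thesis using L by blast
  next
    assume "\<exists>u a b. w = u @ replicate a 0 @ replicate b 1 \<and> a \<ge> 1 \<and> (u = [] \<or> last u = 1) \<and> set u \<subseteq> {0,1}"
    then obtain u a b where w: "w = u @ replicate a 0 @ replicate b 1" and a: "a \<ge> 1"
      and u: "u = [] \<or> last u = 1" "set u \<subseteq> {0,1}" by blast
    have g1: "G q True w = (G q True u \<and> b < q * a)" unfolding w by (rule BL) (use u a in auto)
    have "w @ [1] = u @ replicate a 0 @ replicate (Suc b) 1" using w by (simp add: replicate_append_same)
    then have g2: "G q True (w @ [1]) = (G q True u \<and> Suc b < q * a)"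
      using BL[OF u(1) a, of q "Suc b"] by simp
    have "b = q * a - 1" "G q True u" using L g1 g2 by auto
    then show ?thesis using w a u by blast
  qed
next
  assume "\<exists>u a. w = u @ replicate a 0 @ replicate (q * a - 1) 1 \<and> a \<ge> 1 \<and>
                (u = [] \<or> last u = 1) \<and> set u \<subseteq> {0, 1} \<and> G q True u"
  then obtain u a where w: "w = u @ replicate a 0 @ replicate (q * a - 1) 1" and a: "a \<ge> 1"
      and u: "u = [] \<or> last u = 1" and gu: "G q True u" by blast
  have qa: "q * a \<ge> 1" using a assms(2) by simp
  have g1: "G q True w = (G q True u \<and> q * a - 1 < q * a)" unfolding w by (rule BL) (use u a in auto)
  have "w @ [1] = u @ replicate a 0 @ replicate (Suc (q * a - 1)) 1" using w by (simp add: replicate_append_same)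
  then have g2: "G q True (w @ [1]) = (G q True u \<and> Suc (q * a - 1) < q * a)"
    using BL[OF u a, of q "Suc (q * a - 1)"] by simp
  show "G q True w \<and> \<not> G q True (w @ [1])" using g1 g2 gu qa by simp
qed

lemma V1:
  assumes "set w \<subseteq> {0, 1}" "q \<ge> 1" "G q True (w @ [1])"
  shows "G q True w"
  using decomp[OF assms(1)]
proof
  assume "\<exists>k. w = replicate k 1"
  then show ?thesis using G_ones by auto
next
  assume "\<exists>u a b. w = u @ replicate a 0 @ replicate b 1 \<and> a \<ge> 1 \<and> (u = [] \<or> last u = 1) \<and> set u \<subseteq> {0,1}"
  then obtain u a b where w: "w = u @ replicate a 0 @ replicate b 1" and a: "a \<ge> 1"
    and u: "u = [] \<or> last u = 1" by blast
  have g1: "G q True w = (G q True u \<and> b < q * a)" unfolding w by (rule BL) (use u a in auto)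
  have "w @ [1] = u @ replicate a 0 @ replicate (Suc b) 1" using w by (simp add: replicate_append_same)
  then have g2: "G q True (w @ [1]) = (G q True u \<and> Suc b < q * a)"
    using BL[OF u a, of q "Suc b"] by simp
  show ?thesis using g1 g2 assms(3) by simp
qed

lemma tw1_rev:
  assumes "a \<ge> 1"
  shows "length (takeWhile (\<lambda>x. x = 1) (rev (u @ replicate a 0 @ replicate b (1::nat)))) = b"
proof -
  obtain a' where a': "a = Suc a'" using assms by (cases a) auto
  have r: "rev (u @ replicate a 0 @ replicate b (1::nat)) = replicate b 1 @ (0 # replicate a' 0 @ rev u)"
    using a' by (simp add: replicate_append_same)
  have "takeWhile (\<lambda>x. x = 1) (replicate b 1 @ (0 # replicate a' 0 @ rev u)) = replicate b (1::nat) @ takeWhile (\<lambda>x. x = 1) (0 # replicate a' 0 @ rev u)"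
    by (rule takeWhile_append2) simp
  then show ?thesis unfolding r by simp
qed

lemma f_inj:
  assumes "q \<ge> 1" "a \<ge> 1" "a' \<ge> 1"
    and eq: "u @ replicate a 0 @ replicate (q * a - 1) 1 = u' @ replicate a' 0 @ replicate (q * a' - 1) (1::nat)"
  shows "a = a' \<and> u = u'"
proof -
  have "q * a - 1 = length (takeWhile (\<lambda>x. x = 1) (rev (u @ replicate a 0 @ replicate (q * a - 1) (1::nat))))"
    by (rule tw1_rev[OF assms(2), symmetric])
  also have "\<dots> = length (takeWhile (\<lambda>x. x = 1) (rev (u' @ replicate a' 0 @ replicate (q * a' - 1) (1::nat))))"
    by (simp only: eq)
  also have "\<dots> = q * a' - 1" by (rule tw1_rev[OF assms(3)])
  finally have "q * a - 1 = q * a' - 1" .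
  moreover have "0 < q * a" "0 < q * a'" using assms(1,2,3) by simp_all
  ultimately have "q * a = q * a'" by arith
  then have aa: "a = a'" using assms(1) by simp
  then have "u = u'" using eq by simp
  then show ?thesis using aa by simp
qed


definition sg :: "nat list \<Rightarrow> int" where "sg w = (-1) ^ num_ones w"
definition SS :: "nat \<Rightarrow> nat \<Rightarrow> int" where "SS q n = (\<Sum>w\<in>qdec_words q n. sg w)"
definition Es :: "nat \<Rightarrow> nat \<Rightarrow> nat list set" where
  "Es q n = {w \<in> qdec_words q n. w = [] \<or> last w = 1}"
definition Ev :: "nat \<Rightarrow> nat \<Rightarrow> int" where "Ev q n = (\<Sum>w\<in>Es q n. sg w)"

lemma W_alt: "qdec_words q n = {w. length w = n \<and> set w \<subseteq> {0, 1} \<and> G q True w}"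
  by (auto simp: qdec_words_def qdec_G)

lemma finW: "finite (qdec_words q n)"
proof (rule finite_subset)
  show "qdec_words q n \<subseteq> {xs. set xs \<subseteq> {0, 1::nat} \<and> length xs = n}" by (auto simp: W_alt)
  show "finite {xs. set xs \<subseteq> {0, 1::nat} \<and> length xs = n}" by (rule finite_lists_length_eq) simp
qed

lemma finEs: "finite (Es q n)" unfolding Es_def using finW by simp

lemma filter_rep0: "filter (\<lambda>x. x = 1) (replicate a (0::nat)) = []"
  by (induction a) auto

lemma filter_rep1: "filter (\<lambda>x. x = 1) (replicate a (1::nat)) = replicate a 1"
  by (induction a) auto

lemma sg_app0: "sg (w @ [0]) = sg w" by (simp add: sg_def num_ones_def)
lemma sg_app1: "sg (w @ [1]) = - sg w" by (simp add: sg_def num_ones_def)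
lemma sg_block: "sg (u @ replicate a 0 @ replicate b 1) = sg u * (-1) ^ b"
  by (simp add: sg_def num_ones_def filter_rep0 filter_rep1 power_add)

lemma SS_Suc:
  assumes "q \<ge> 1"
  shows "SS q (Suc m) = (\<Sum>w\<in>{w \<in> qdec_words q m. \<not> G q True (w @ [1])}. sg w)"
proof -
  define W where "W = qdec_words q m"
  define A where "A = {w \<in> W. G q True (w @ [1])}"
  define B where "B = {w \<in> W. \<not> G q True (w @ [1])}"
  have fW: "finite W" unfolding W_def by (rule finW)
  have fA: "finite A" "finite B" unfolding A_def B_def using fW by simp_all
  have eq: "qdec_words q (Suc m) = (\<lambda>w. w @ [0]) ` W \<union> (\<lambda>w. w @ [1]) ` A"
  proof (rule subset_antisym)
    show "qdec_words q (Suc m) \<subseteq> (\<lambda>w. w @ [0]) ` W \<union> (\<lambda>w. w @ [1]) ` A"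
    proof
      fix x assume x: "x \<in> qdec_words q (Suc m)"
      then have "x \<noteq> []" by (auto simp: W_alt)
      then obtain w y where xw: "x = w @ [y]" by (metis rev_exhaust)
      have props: "length w = m" "set w \<subseteq> {0,1}" "y = 0 \<or> y = 1" "G q True (w @ [y])"
        using x xw by (auto simp: W_alt)
      show "x \<in> (\<lambda>w. w @ [0]) ` W \<union> (\<lambda>w. w @ [1]) ` A"
      proof (cases "y = 0")
        case True
        then have "G q True w" using props V0[OF props(2) assms] by simp
        then have "w \<in> W" using props by (simp add: W_def W_alt)
        then show ?thesis using xw True by blast
      next
        case False
        then have y1: "y = 1" using props by simp
        then have "G q True w" using props V1[OF props(2) assms] by simp
        then have "w \<in> A" using props y1 by (simp add: A_def W_def W_alt)
        then show ?thesis using xw y1 by blast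
      qed
    qed
  next
    show "(\<lambda>w. w @ [0]) ` W \<union> (\<lambda>w. w @ [1]) ` A \<subseteq> qdec_words q (Suc m)"
    proof
      fix x assume "x \<in> (\<lambda>w. w @ [0]) ` W \<union> (\<lambda>w. w @ [1]) ` A"
      then show "x \<in> qdec_words q (Suc m)"
      proof
        assume "x \<in> (\<lambda>w. w @ [0]) ` W"
        then obtain w where w: "w \<in> W" "x = w @ [0]" by blast
        have "set w \<subseteq> {0,1}" "G q True w" "length w = m" using w by (auto simp: W_def W_alt)
        then show ?thesis using w V0[OF _ assms, of w] by (simp add: W_alt)
      next
        assume "x \<in> (\<lambda>w. w @ [1]) ` A"
        then obtain w where w: "w \<in> A" "x = w @ [1]" by blast
        then show ?thesis by (auto simp: A_def W_def W_alt)
      qed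
    qed
  qed
  have disj: "(\<lambda>w. w @ [0]) ` W \<inter> (\<lambda>w. w @ [1]) ` A = {}" by auto
  have inj0: "inj_on (\<lambda>w. w @ [0::nat]) W" by (rule inj_onI) simp
  have inj1: "inj_on (\<lambda>w. w @ [1::nat]) A" by (rule inj_onI) simp
  have "SS q (Suc m) = sum sg ((\<lambda>w. w @ [0]) ` W) + sum sg ((\<lambda>w. w @ [1]) ` A)"
    unfolding SS_def eq by (rule sum.union_disjoint) (use fW fA disj in auto)
  also have "sum sg ((\<lambda>w. w @ [0]) ` W) = sum sg W"
    by (simp add: sum.reindex[OF inj0] sg_app0 comp_def)
  also have "sum sg ((\<lambda>w. w @ [1]) ` A) = - sum sg A"
    unfolding sum.reindex[OF inj1] comp_def sg_app1 sum_negf by (rule refl)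
  also have "sum sg W = sum sg A + sum sg B"
  proof -
    have "W = A \<union> B" "A \<inter> B = {}" unfolding A_def B_def by auto
    then show ?thesis using fA by (simp add: sum.union_disjoint)
  qed
  finally show ?thesis unfolding B_def W_def by simp
qed


lemma B_eq:
  assumes q: "q \<ge> 1"
  shows "{w \<in> qdec_words q m. \<not> G q True (w @ [1])} =
         (\<lambda>(a, u). u @ replicate a 0 @ replicate (q * a - 1) 1) `
           (SIGMA a:{1..Suc m div Suc q}. Es q (Suc m - Suc q * a))"
proof (rule subset_antisym)
  show "{w \<in> qdec_words q m. \<not> G q True (w @ [1])} \<subseteq>
         (\<lambda>(a, u). u @ replicate a 0 @ replicate (q * a - 1) 1) `
           (SIGMA a:{1..Suc m div Suc q}. Es q (Suc m - Suc q * a))"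
  proof
    fix w assume w: "w \<in> {w \<in> qdec_words q m. \<not> G q True (w @ [1])}"
    have props: "length w = m" "set w \<subseteq> {0,1}" "G q True w" "\<not> G q True (w @ [1])"
      using w by (auto simp: W_alt)
    obtain u a where wu: "w = u @ replicate a 0 @ replicate (q * a - 1) 1" and a: "a \<ge> 1"
      and u: "u = [] \<or> last u = 1" "set u \<subseteq> {0, 1}" "G q True u"
      using Uchar[OF props(2) q] props(3,4) by blast
    have qa: "0 < q * a" using q a by simp
    have "length u + a + (q * a - 1) = m" using wu props(1) by simp
    then have "length u + a + q * a = Suc m" using qa by arith
    then have len: "length u + Suc q * a = Suc m" by simp
    then have "a * Suc q \<le> Suc m" by (simp add: mult.commute)
    then have aK: "a \<le> Suc m div Suc q" by (simp add: less_eq_div_iff_mult_less_eq)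
    have "u \<in> Es q (Suc m - Suc q * a)" using len u by (auto simp: Es_def W_alt)
    then have "(a, u) \<in> (SIGMA a:{1..Suc m div Suc q}. Es q (Suc m - Suc q * a))" using a aK by simp
    then show "w \<in> (\<lambda>(a, u). u @ replicate a 0 @ replicate (q * a - 1) 1) `
           (SIGMA a:{1..Suc m div Suc q}. Es q (Suc m - Suc q * a))"
      using wu by (auto intro: rev_image_eqI)
  qed
next
  show "(\<lambda>(a, u). u @ replicate a 0 @ replicate (q * a - 1) 1) `
           (SIGMA a:{1..Suc m div Suc q}. Es q (Suc m - Suc q * a)) \<subseteq>
        {w \<in> qdec_words q m. \<not> G q True (w @ [1])}"
  proof
    fix w assume "w \<in> (\<lambda>(a, u). u @ replicate a 0 @ replicate (q * a - 1) 1) `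
           (SIGMA a:{1..Suc m div Suc q}. Es q (Suc m - Suc q * a))"
    then obtain p where p: "p \<in> (SIGMA a:{1..Suc m div Suc q}. Es q (Suc m - Suc q * a))"
      and wp: "w = (\<lambda>(a, u). u @ replicate a 0 @ replicate (q * a - 1) 1) p" by blast
    obtain a u where pa: "p = (a, u)" by (cases p)
    have au: "a \<in> {1..Suc m div Suc q}" "u \<in> Es q (Suc m - Suc q * a)" using p pa by auto
    have wu: "w = u @ replicate a 0 @ replicate (q * a - 1) 1" using wp pa by simp
    have a: "a \<ge> 1" and aK: "a \<le> Suc m div Suc q" using au by auto
    have "a * Suc q \<le> Suc m" using aK by (simp add: less_eq_div_iff_mult_less_eq)
    then have le: "Suc q * a \<le> Suc m" by (simp add: mult.commute)
    have u: "length u = Suc m - Suc q * a" "set u \<subseteq> {0,1}" "G q True u" "u = [] \<or> last u = 1"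
      using au(2) by (auto simp: Es_def W_alt)
    have qa: "0 < q * a" using q a by simp
    have len: "length w = m" using wu u(1) le qa by simp
    have sw: "set w \<subseteq> {0,1}" using wu u(2) by auto
    have "G q True w \<and> \<not> G q True (w @ [1])"
      using Uchar[OF sw q] wu a u by blast
    then show "w \<in> {w \<in> qdec_words q m. \<not> G q True (w @ [1])}" using len sw by (simp add: W_alt)
  qed
qed

lemma SS_formula:
  assumes q: "q \<ge> 1"
  shows "SS q (Suc m) = (\<Sum>a=1..Suc m div Suc q. (-1) ^ (q * a - 1) * Ev q (Suc m - Suc q * a))"
proof -
  define f where "f = (\<lambda>(a, u). u @ replicate a 0 @ replicate (q * a - 1) (1::nat))"
  define Sg where "Sg = (SIGMA a:{1..Suc m div Suc q}. Es q (Suc m - Suc q * a))"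
  have inj: "inj_on f Sg"
  proof (rule inj_onI)
    fix x y assume "x \<in> Sg" "y \<in> Sg" "f x = f y"
    moreover obtain a u where x: "x = (a, u)" by (cases x)
    moreover obtain a' u' where y: "y = (a', u')" by (cases y)
    ultimately have a: "a \<ge> 1" "a' \<ge> 1" and e: "u @ replicate a 0 @ replicate (q * a - 1) 1 = u' @ replicate a' 0 @ replicate (q * a' - 1) (1::nat)"
      unfolding Sg_def f_def by auto
    show "x = y" using f_inj[OF q a e] x y by simp
  qed
  have "SS q (Suc m) = sum sg (f ` Sg)" unfolding SS_Suc[OF q] B_eq[OF q] f_def Sg_def by (rule refl)
  also have "\<dots> = sum (sg \<circ> f) Sg" by (rule sum.reindex[OF inj])
  also have "\<dots> = (\<Sum>(a, u)\<in>Sg. sg u * (-1) ^ (q * a - 1))"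
  proof (rule sum.cong[OF refl])
    fix x assume "x \<in> Sg"
    obtain a u where x: "x = (a, u)" by (cases x)
    show "(sg \<circ> f) x = (case x of (a, u) \<Rightarrow> sg u * (-1) ^ (q * a - 1))"
      unfolding x f_def comp_def prod.case sg_block by (rule refl)
  qed
  also have "\<dots> = (\<Sum>a=1..Suc m div Suc q. \<Sum>u\<in>Es q (Suc m - Suc q * a). sg u * (-1) ^ (q * a - 1))"
    unfolding Sg_def by (rule sum.Sigma[symmetric]) (auto simp: finEs)
  also have "\<dots> = (\<Sum>a=1..Suc m div Suc q. (-1) ^ (q * a - 1) * Ev q (Suc m - Suc q * a))"
    by (rule sum.cong[OF refl]) (simp add: Ev_def sum_distrib_left mult.commute)
  finally show ?thesis .
qed

lemma Ev_Suc:
  assumes q: "q \<ge> 1"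
  shows "Ev q (Suc m) = SS q (Suc m) - SS q m"
proof -
  have eq: "qdec_words q (Suc m) = Es q (Suc m) \<union> (\<lambda>w. w @ [0]) ` qdec_words q m"
  proof (rule subset_antisym)
    show "qdec_words q (Suc m) \<subseteq> Es q (Suc m) \<union> (\<lambda>w. w @ [0]) ` qdec_words q m"
    proof
      fix x assume x: "x \<in> qdec_words q (Suc m)"
      show "x \<in> Es q (Suc m) \<union> (\<lambda>w. w @ [0]) ` qdec_words q m"
      proof (cases "x = [] \<or> last x = 1")
        case True
        then show ?thesis using x by (simp add: Es_def)
      next
        case False
        then have "x \<noteq> []" by simp
        then obtain w y where xw: "x = w @ [y]" by (metis rev_exhaust)
        have props: "length w = m" "set w \<subseteq> {0,1}" "y = 0 \<or> y = 1" "G q True (w @ [y])"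
          using x xw by (auto simp: W_alt)
        have y0: "y = 0" using False xw props(3) by auto
        have "G q True w" using props V0[OF props(2) q] y0 by simp
        then have "w \<in> qdec_words q m" using props by (simp add: W_alt)
        then show ?thesis using xw y0 by blast
      qed
    qed
  next
    show "Es q (Suc m) \<union> (\<lambda>w. w @ [0]) ` qdec_words q m \<subseteq> qdec_words q (Suc m)"
    proof
      fix x assume "x \<in> Es q (Suc m) \<union> (\<lambda>w. w @ [0]) ` qdec_words q m"
      then show "x \<in> qdec_words q (Suc m)"
      proof
        assume "x \<in> Es q (Suc m)" then show ?thesis by (simp add: Es_def)
      next
        assume "x \<in> (\<lambda>w. w @ [0]) ` qdec_words q m"
        then obtain w where w: "w \<in> qdec_words q m" "x = w @ [0]" by blast
        have "set w \<subseteq> {0,1}" "G q True w" "length w = m" using w by (auto simp: W_alt)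
        then show ?thesis using w V0[OF _ q, of w] by (simp add: W_alt)
      qed
    qed
  qed
  have disj: "Es q (Suc m) \<inter> (\<lambda>w. w @ [0]) ` qdec_words q m = {}" by (auto simp: Es_def)
  have inj0: "inj_on (\<lambda>w. w @ [0::nat]) (qdec_words q m)" by (rule inj_onI) simp
  have "SS q (Suc m) = Ev q (Suc m) + sum sg ((\<lambda>w. w @ [0]) ` qdec_words q m)"
    unfolding SS_def Ev_def eq by (rule sum.union_disjoint) (use finEs finW disj in auto)
  also have "sum sg ((\<lambda>w. w @ [0]) ` qdec_words q m) = SS q m"
    unfolding sum.reindex[OF inj0] comp_def sg_app0 SS_def by (rule refl)
  finally show ?thesis by simp
qed

lemma W0: "qdec_words q 0 = {[]}" by (auto simp: W_alt)
lemma SS0: "SS q 0 = 1" by (simp add: SS_def W0 sg_def num_ones_def)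
lemma Ev0: "Ev q 0 = 1"
proof -
  have "Es q 0 = {[]}" by (auto simp: Es_def W0)
  then show ?thesis by (simp add: Ev_def sg_def num_ones_def)
qed


lemma SS_small:
  assumes q: "q \<ge> 1" and n: "1 \<le> n" "n \<le> q"
  shows "SS q n = 0"
proof -
  obtain m where m: "n = Suc m" using n by (cases n) auto
  have "Suc m div Suc q = 0" using m n by simp
  then show ?thesis unfolding m SS_formula[OF q] by simp
qed

lemma SS_q1:
  assumes q: "q \<ge> 1"
  shows "SS q (Suc q) = (-1) ^ (q - 1)"
proof -
  have "Suc q div Suc q = 1" by simp
  then show ?thesis unfolding SS_formula[OF q] by (simp add: Ev0)
qed

lemma neg_pow_pred: "q \<ge> 1 \<Longrightarrow> ((-1::int) ^ (q - 1)) = - ((-1) ^ q)"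
  by (cases q) auto

lemma SS_rec:
  assumes q: "q \<ge> 1" and n: "n \<ge> q + 2"
  shows "SS q n = (-1) ^ q * SS q (n - (q + 2))"
proof -
  obtain m where m: "n = Suc m" using n by (cases n) auto
  define r where "r = Suc m - Suc q"
  have r1: "r \<ge> 1" using n m unfolding r_def by simp
  obtain r' where r': "r = Suc r'" using r1 by (cases r) auto
  have sm: "Suc m = r + Suc q" using n m unfolding r_def by simp
  define K' where "K' = r div Suc q"
  have K: "Suc m div Suc q = Suc K'" unfolding sm K'_def by (subst div_add_self2) simp_all
  define g where "g = (\<lambda>a. (-1::int) ^ (q * a - 1) * Ev q (Suc m - Suc q * a))"
  have "SS q n = sum g {1..Suc K'}" unfolding m SS_formula[OF q] K g_def by (rule refl)
  also have "\<dots> = g 1 + sum g {Suc 1..Suc K'}" by (rule sum.atLeast_Suc_atMost) simp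
  also have "sum g {Suc 1..Suc K'} = sum (\<lambda>a. g (Suc a)) {1..K'}" by (rule sum.shift_bounds_cl_Suc_ivl)
  also have "\<dots> = (\<Sum>a=1..K'. (-1) ^ q * ((-1) ^ (q * a - 1) * Ev q (r - Suc q * a)))"
  proof (rule sum.cong[OF refl])
    fix a assume "a \<in> {1..K'}"
    then have a: "a \<ge> 1" by simp
    have qa: "q * a \<ge> 1" using q a by simp
    have e1: "q * Suc a - 1 = q + (q * a - 1)" using qa by simp
    have e2: "Suc m - Suc q * Suc a = r - Suc q * a" unfolding sm by simp
    show "g (Suc a) = (-1) ^ q * ((-1) ^ (q * a - 1) * Ev q (r - Suc q * a))"
      unfolding g_def e1 e2 power_add by simp
  qed
  also have "\<dots> = (-1) ^ q * SS q r"
    unfolding r' SS_formula[OF q] sum_distrib_left K'_def r' by (rule refl)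
  also have "g 1 = (-1) ^ (q - 1) * Ev q r" unfolding g_def r_def by simp
  also have "Ev q r = SS q r - SS q r'" unfolding r' by (rule Ev_Suc[OF q])
  finally have "SS q n = (-1) ^ q * SS q r'" using neg_pow_pred[OF q] by (simp add: algebra_simps)
  moreover have "r' = n - (q + 2)" using r' m unfolding r_def by simp
  ultimately show ?thesis by simp
qed

lemma SS_bound:
  assumes q: "q \<ge> 1"
  shows "\<bar>SS q n\<bar> \<le> 1"
proof (induction n rule: less_induct)
  case (less n)
  show ?case
  proof (cases "n = 0")
    case True then show ?thesis by (simp add: SS0)
  next
    case False
    show ?thesis
    proof (cases "n \<le> q")
      case True then show ?thesis using SS_small[OF q] False by simp
    next
      case nq: False
      show ?thesis
      proof (cases "n = Suc q")
        case True then show ?thesis using SS_q1[OF q] by (simp add: abs_mult)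
      next
        case False
        then have "n \<ge> q + 2" using nq by simp
        then show ?thesis using SS_rec[OF q] less.IH[of "n - (q + 2)"] by (simp add: abs_mult)
      qed
    qed
  qed
qed

theorem corollary1:
  fixes n q :: nat
  assumes "q \<ge> 1"
  shows "int (card {w \<in> qdec_words q n. even (num_ones w)})
         - int (card {w \<in> qdec_words q n. odd (num_ones w)}) \<in> {-1, 0, 1}"
proof -
  have f: "finite (qdec_words q n)" by (rule finW)
  have "SS q n = (\<Sum>w\<in>qdec_words q n. if even (num_ones w) then 1 else (-1::int))"
    unfolding SS_def sg_def by (rule sum.cong[OF refl]) simp
  also have "\<dots> = (\<Sum>w\<in>{w \<in> qdec_words q n. even (num_ones w)}. 1) + (\<Sum>w\<in>{w \<in> qdec_words q n. odd (num_ones w)}. (-1::int))"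
    using f by (simp add: sum.If_cases Int_def)
  also have "\<dots> = int (card {w \<in> qdec_words q n. even (num_ones w)})
         - int (card {w \<in> qdec_words q n. odd (num_ones w)})" by simp
  finally have eq: "int (card {w \<in> qdec_words q n. even (num_ones w)})
         - int (card {w \<in> qdec_words q n. odd (num_ones w)}) = SS q n" by simp
  have "\<bar>SS q n\<bar> \<le> 1" by (rule SS_bound[OF assms])
  then have "SS q n \<in> {-1, 0, 1}" by auto
  then show ?thesis unfolding eq .
qed

end
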